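(* Let $\mathbf{L}=(L,\le)$ be a finite join-semilattice with greatest element $1_{\mathbf{L}}$, let $n\in\mathbb{N}$, and let $\mathbf{K}=(K,\le)$ with $K=\{1,\dots,n\}\cup\{\infty\}$ (disjoint union) and $\le=\mathrm{id}_K\cup(K\times\{\infty\})$, so $1_{\mathbf{K}}=\infty$. Let $S$ be a subgroup of $(\mathrm{Aut}(\mathbf{K}),\circ)$ such that $f\vee g=k_{1_{\mathbf{K}}}$ for all $f,g\in S$ with $f\ne g$, and let $\bar S=S\cup\{k_{1_{\mathbf{K}}}\}$. Let $(R,\vee,\circ)$ be a subsemiring of $(\mathrm{JM}_1(\mathbf{L}\boxtimes\mathbf{K}),\vee,\circ)$ such that (a) every $\varphi\in R$ equals $f\boxtimes g$ for some $f\in\mathrm{JM}_1(\mathbf{L})$ and $g\in\bar S$; (b) $f_{a,b}\boxtimes g\in R$ for all $a\in L\setminus\{1_{\mathbf{L}}\}$, $b\in L$, $g\in\bar S$; (c) for every $\varphi\in R$ there exist $a\in L\setminus\{1_{\mathbf{L}}\}$, $b\in L$, $g\in\bar S$ with $f_{a,b}\boxtimes g\le\varphi$. Suppose moreover that $|S|=n$, and that $n>1$ or $\mathbf{L}$ does not satisfy property $( * )$. Then $(L\boxtimes K,\vee)$, with action $\varphi\cdot z=\varphi(z)$, is a finite idempotent irreducible $R$-semimodule which does not satisfy property $( * )$.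
   Context: For a finite join-semilattice $\mathbf{M}$ with greatest element $1$, $\mathrm{JM}_1(\mathbf{M})$ is the set of join-preserving maps $f:M\to M$ with $f(1)=1$, a semiring under pointwise join and composition, ordered pointwise; $k_a$ is the constant map with value $a$; $f_{a,b}(x)=b$ if $x\le a$ and $1$ otherwise. $\mathrm{Aut}(\mathbf{K})$ is the group of order automorphisms of $\mathbf{K}$. Let $A=\{(x,y)\in L\times K: x=1_{\mathbf{L}}\text{ or }y=1_{\mathbf{K}}\}$, and $L\boxtimes K$ the quotient of $L\times K$ collapsing $A$ to one class (denoted $A$), other classes singletons; order: every class is $\le A$, and $[a,b]\le[c,d]$ iff $a\le c$, $b\le d$ for classes other than $A$; $\mathbf{L}\boxtimes\mathbf{K}=(L\boxtimes K,\le)$. For $f\in\mathrm{JM}_1(\mathbf{L})$, $g\in\mathrm{JM}_1(\mathbf{K})$, $(f\boxtimes g)([x,y])=[f(x),g(y)]$. A semilattice $(M,+)$ with greatest element $\infty_M$ satisfies $( * )$ if there exists $u\in M$ with $\infty_M\ne u+x$ for all $x\ne\infty_M$. An $R$-semimodule is a commutative semigroup $(M,+)$ with an action satisfying $r(sx)=(rs)x$, $(r+s)x=rx+sx$, $r(x+y)=rx+ry$; idempotent if $x+x=x$. A subsemimodule is a subsemigroup closed under the action; a semimodule congruence is an equivalence compatible with $+$ and the action. $M$ is quasitrivial if $rx=sx$ for all $r,s,x$; id-quasitrivial if $rx=x$ for all $r,x$; sub-irreducible if not quasitrivial and all proper subsemimodules are id-quasitrivial; quotient-irreducible if not quasitrivial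 and its only congruences are the identity and $M\times M$; irreducible if both. *)

theory Defs
  imports Main
begin

text \<open>K is represented as the type 'k kext, where 'k is a finite type with CARD('k) = n;
  Fin i stands for the element i of {1,...,n} and Infty for infinity.
  The order is id_K union (K x {infinity}).\<close>

datatype 'k kext = Fin 'k | Infty

instantiation kext :: (type) order_top
begin
definition less_eq_kext :: "'k kext \<Rightarrow> 'k kext \<Rightarrow> bool" where
  "less_eq_kext x y \<longleftrightarrow> x = y \<or> y = Infty"
definition less_kext :: "'k kext \<Rightarrow> 'k kext \<Rightarrow> bool" where
  "less_kext x y \<longleftrightarrow> x \<le> y \<and> x \<noteq> y"
definition top_kext :: "'k kext" where
  "top_kext = Infty"
instance by standard (auto simp: less_eq_kext_def less_kext_def top_kext_def)
end

instantiation kext :: (type) semilattice_sup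
begin
definition sup_kext :: "'k kext \<Rightarrow> 'k kext \<Rightarrow> 'k kext" where
  "sup_kext x y = (if x = y then x else Infty)"
instance by standard (auto simp: less_eq_kext_def sup_kext_def)
end

text \<open>Elements: the class A (represented by None) and the singleton classes [x,y]
  with x \<noteq> 1 and y \<noteq> 1 (represented by Some (x,y)).\<close>

typedef (overloaded) ('a::order_top, 'b::order_top) boxt =
  "{z :: ('a \<times> 'b) option. \<forall>a b. z = Some (a, b) \<longrightarrow> a \<noteq> top \<and> b \<noteq> top}"
  by (rule exI[of _ None]) auto

definition bcls :: "'a::order_top \<Rightarrow> 'b::order_top \<Rightarrow> ('a, 'b) boxt" where
  "bcls x y = Abs_boxt (if x = top \<or> y = top then None else Some (x, y))"

instantiation boxt :: (order_top, order_top) order_top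
begin
definition less_eq_boxt :: "('a, 'b) boxt \<Rightarrow> ('a, 'b) boxt \<Rightarrow> bool" where
  "less_eq_boxt z w \<longleftrightarrow> Rep_boxt w = None \<or>
     (\<exists>a b c d. Rep_boxt z = Some (a, b) \<and> Rep_boxt w = Some (c, d) \<and> a \<le> c \<and> b \<le> d)"
definition less_boxt :: "('a, 'b) boxt \<Rightarrow> ('a, 'b) boxt \<Rightarrow> bool" where
  "less_boxt z w \<longleftrightarrow> z \<le> w \<and> z \<noteq> w"
definition top_boxt :: "('a, 'b) boxt" where
  "top_boxt = Abs_boxt None"
instance
proof
  fix x y z :: "('a, 'b) boxt"
  show "(x < y) = (x \<le> y \<and> \<not> y \<le> x)"
    using Rep_boxt[of x] Rep_boxt[of y]
    by (auto simp: less_boxt_def less_eq_boxt_def Rep_boxt_inject[symmetric])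
  show "x \<le> x" by (cases "Rep_boxt x") (auto simp: less_eq_boxt_def)
  show "x \<le> y \<Longrightarrow> y \<le> z \<Longrightarrow> x \<le> z"
    using Rep_boxt[of y] Rep_boxt[of z]
    by (auto simp: less_eq_boxt_def intro: order_trans)
  show "x \<le> y \<Longrightarrow> y \<le> x \<Longrightarrow> x = y"
    using Rep_boxt[of x] Rep_boxt[of y]
    by (auto simp: less_eq_boxt_def Rep_boxt_inject[symmetric])
  show "x \<le> top"
    by (simp add: less_eq_boxt_def top_boxt_def Abs_boxt_inverse)
qed
end

instantiation boxt :: ("{semilattice_sup,order_top}", "{semilattice_sup,order_top}") semilattice_sup
begin
definition sup_boxt :: "('a, 'b) boxt \<Rightarrow> ('a, 'b) boxt \<Rightarrow> ('a, 'b) boxt" where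
  "sup_boxt z w = (case (Rep_boxt z, Rep_boxt w) of
     (Some (a, b), Some (c, d)) \<Rightarrow> bcls (sup a c) (sup b d)
   | _ \<Rightarrow> top)"
instance
proof
  fix x y z :: "('a, 'b) boxt"
  have R: "Rep_boxt (bcls a b) = (if a = top \<or> b = top then None else Some (a, b))" for a :: 'a and b :: 'b
    unfolding bcls_def by (rule Abs_boxt_inverse) auto
  have T: "Rep_boxt (top :: ('a,'b) boxt) = None"
    by (simp add: top_boxt_def Abs_boxt_inverse)
  have ge: "u \<le> sup u v \<and> v \<le> sup u v" for u v :: "('a, 'b) boxt"
  proof (cases "\<exists>a b c d. Rep_boxt u = Some (a, b) \<and> Rep_boxt v = Some (c, d)")
    case True
    then obtain a b c d where u: "Rep_boxt u = Some (a, b)" and v: "Rep_boxt v = Some (c, d)"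
      by blast
    show ?thesis
    proof (cases "sup a c = top \<or> sup b d = top")
      case True then show ?thesis using u v
        by (simp add: sup_boxt_def less_eq_boxt_def R)
    next
      case False then show ?thesis using u v
        by (simp add: sup_boxt_def less_eq_boxt_def R)
    qed
  next
    case False
    then have "sup u v = top"
      by (cases "Rep_boxt u"; cases "Rep_boxt v") (auto simp: sup_boxt_def)
    then show ?thesis by simp
  qed
  show "x \<le> sup x y" using ge by blast
  show "y \<le> sup x y" using ge by blast
  show "y \<le> x \<Longrightarrow> z \<le> x \<Longrightarrow> sup y z \<le> x"
  proof -
    assume a1: "y \<le> x" and a2: "z \<le> x"
    show "sup y z \<le> x"
    proof (cases "Rep_boxt x")
      case None then show ?thesis by (simp add: less_eq_boxt_def)
    next
      case (Some p)
      obtain e f where p: "p = (e, f)" by (cases p)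
      have x: "Rep_boxt x = Some (e, f)" using Some p by simp
      have ef: "e \<noteq> top" "f \<noteq> top" using Rep_boxt[of x] x by auto
      from a1 x obtain a b where
        y: "Rep_boxt y = Some (a, b)" and le1: "a \<le> e" "b \<le> f"
        unfolding less_eq_boxt_def by auto
      from a2 x obtain c d where
        z: "Rep_boxt z = Some (c, d)" and le2: "c \<le> e" "d \<le> f"
        unfolding less_eq_boxt_def by auto
      have s1: "sup a c \<le> e" "sup b d \<le> f" using le1 le2 by simp_all
      have n1: "sup a c \<noteq> top" using s1(1) ef(1) top_unique by metis
      have n2: "sup b d \<noteq> top" using s1(2) ef(2) top_unique by metis
      have "Rep_boxt (sup y z) = Some (sup a c, sup b d)"
        using y z n1 n2 by (simp add: sup_boxt_def R)
      then show ?thesis using s1 x unfolding less_eq_boxt_def by blast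
    qed
  qed
qed
end

text \<open>The product map (f boxtimes g)([x,y]) = [f x, g y]; on the class A it is A
  (which agrees with the paper's definition, since f(1) = 1).\<close>

definition boxmap :: "('a::order_top \<Rightarrow> 'a) \<Rightarrow> ('b::order_top \<Rightarrow> 'b) \<Rightarrow> ('a, 'b) boxt \<Rightarrow> ('a, 'b) boxt" where
  "boxmap f g z = (case Rep_boxt z of None \<Rightarrow> top | Some (x, y) \<Rightarrow> bcls (f x) (g y))"

definition JM1 :: "('m::{sup,top} \<Rightarrow> 'm) set" where
  "JM1 = {f. (\<forall>x y. f (sup x y) = sup (f x) (f y)) \<and> f top = top}"

definition kconst :: "'m \<Rightarrow> ('m \<Rightarrow> 'm)" where
  "kconst a = (\<lambda>_. a)"

definition fab :: "'m::order_top \<Rightarrow> 'm \<Rightarrow> ('m \<Rightarrow> 'm)" where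
  "fab a b = (\<lambda>x. if x \<le> a then b else top)"

definition Aut :: "('k::order \<Rightarrow> 'k) set" where
  "Aut = {f. bij f \<and> (\<forall>x y. x \<le> y \<longleftrightarrow> f x \<le> f y)}"

definition subgroup_Aut :: "('k::order \<Rightarrow> 'k) set \<Rightarrow> bool" where
  "subgroup_Aut S \<longleftrightarrow> S \<subseteq> Aut \<and> id \<in> S \<and> (\<forall>f\<in>S. \<forall>g\<in>S. f \<circ> g \<in> S) \<and> (\<forall>f\<in>S. inv f \<in> S)"

definition subsemiring_JM1 :: "('m::{semilattice_sup,top} \<Rightarrow> 'm) set \<Rightarrow> bool" where
  "subsemiring_JM1 R \<longleftrightarrow> R \<noteq> {} \<and> R \<subseteq> JM1 \<and>
     (\<forall>f\<in>R. \<forall>g\<in>R. sup f g \<in> R \<and> f \<circ> g \<in> R)"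

definition star_prop :: "('m \<Rightarrow> 'm \<Rightarrow> 'm) \<Rightarrow> 'm \<Rightarrow> bool" where
  "star_prop add infty \<longleftrightarrow> (\<exists>u. \<forall>x. x \<noteq> infty \<longrightarrow> infty \<noteq> add u x)"

definition semimodule ::
  "'r set \<Rightarrow> ('r \<Rightarrow> 'r \<Rightarrow> 'r) \<Rightarrow> ('r \<Rightarrow> 'r \<Rightarrow> 'r) \<Rightarrow> ('m \<Rightarrow> 'm \<Rightarrow> 'm) \<Rightarrow> ('r \<Rightarrow> 'm \<Rightarrow> 'm) \<Rightarrow> bool" where
  "semimodule R radd rmul add act \<longleftrightarrow>
     (\<forall>x y z. add (add x y) z = add x (add y z)) \<and> (\<forall>x y. add x y = add y x) \<and>
     (\<forall>r\<in>R. \<forall>s\<in>R. \<forall>x. act r (act s x) = act (rmul r s) x) \<and>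
     (\<forall>r\<in>R. \<forall>s\<in>R. \<forall>x. act (radd r s) x = add (act r x) (act s x)) \<and>
     (\<forall>r\<in>R. \<forall>x y. act r (add x y) = add (act r x) (act r y))"

definition idempotent_sm :: "('m \<Rightarrow> 'm \<Rightarrow> 'm) \<Rightarrow> bool" where
  "idempotent_sm add \<longleftrightarrow> (\<forall>x. add x x = x)"

definition subsemimodule :: "'r set \<Rightarrow> ('m \<Rightarrow> 'm \<Rightarrow> 'm) \<Rightarrow> ('r \<Rightarrow> 'm \<Rightarrow> 'm) \<Rightarrow> 'm set \<Rightarrow> bool" where
  "subsemimodule R add act N \<longleftrightarrow>
     (\<forall>x\<in>N. \<forall>y\<in>N. add x y \<in> N) \<and> (\<forall>r\<in>R. \<forall>x\<in>N. act r x \<in> N)"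

definition sm_congruence :: "'r set \<Rightarrow> ('m \<Rightarrow> 'm \<Rightarrow> 'm) \<Rightarrow> ('r \<Rightarrow> 'm \<Rightarrow> 'm) \<Rightarrow> ('m \<times> 'm) set \<Rightarrow> bool" where
  "sm_congruence R add act E \<longleftrightarrow> equiv UNIV E \<and>
     (\<forall>x y u v. (x, y) \<in> E \<and> (u, v) \<in> E \<longrightarrow> (add x u, add y v) \<in> E) \<and>
     (\<forall>r\<in>R. \<forall>x y. (x, y) \<in> E \<longrightarrow> (act r x, act r y) \<in> E)"

definition quasitrivial :: "'r set \<Rightarrow> ('r \<Rightarrow> 'm \<Rightarrow> 'm) \<Rightarrow> bool" where
  "quasitrivial R act \<longleftrightarrow> (\<forall>r\<in>R. \<forall>s\<in>R. \<forall>x. act r x = act s x)"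

definition id_quasitrivial_on :: "'r set \<Rightarrow> ('r \<Rightarrow> 'm \<Rightarrow> 'm) \<Rightarrow> 'm set \<Rightarrow> bool" where
  "id_quasitrivial_on R act N \<longleftrightarrow> (\<forall>r\<in>R. \<forall>x\<in>N. act r x = x)"

definition sub_irreducible :: "'r set \<Rightarrow> ('m \<Rightarrow> 'm \<Rightarrow> 'm) \<Rightarrow> ('r \<Rightarrow> 'm \<Rightarrow> 'm) \<Rightarrow> bool" where
  "sub_irreducible R add act \<longleftrightarrow> \<not> quasitrivial R act \<and>
     (\<forall>N. subsemimodule R add act N \<and> N \<noteq> UNIV \<longrightarrow> id_quasitrivial_on R act N)"

definition quotient_irreducible :: "'r set \<Rightarrow> ('m \<Rightarrow> 'm \<Rightarrow> 'm) \<Rightarrow> ('r \<Rightarrow> 'm \<Rightarrow> 'm) \<Rightarrow> bool" where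
  "quotient_irreducible R add act \<longleftrightarrow> \<not> quasitrivial R act \<and>
     (\<forall>E. sm_congruence R add act E \<longrightarrow> E = Id \<or> E = UNIV)"

definition irreducible_sm :: "'r set \<Rightarrow> ('m \<Rightarrow> 'm \<Rightarrow> 'm) \<Rightarrow> ('r \<Rightarrow> 'm \<Rightarrow> 'm) \<Rightarrow> bool" where
  "irreducible_sm R add act \<longleftrightarrow> sub_irreducible R add act \<and> quotient_irreducible R add act"

end

theory Submission
  imports Defs
begin

lemma Rep_bcls: "Rep_boxt (bcls a b) = (if a = top \<or> b = top then None else Some (a, b))"
  unfolding bcls_def by (rule Abs_boxt_inverse) auto

lemma Rep_top_boxt: "Rep_boxt (top :: ('a::order_top,'b::order_top) boxt) = None"
  by (simp add: top_boxt_def Abs_boxt_inverse)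

lemma boxt_cases:
  fixes z :: "('a::order_top,'b::order_top) boxt"
  obtains "z = top" | a b where "a \<noteq> top" "b \<noteq> top" "z = bcls a b"
proof (cases "Rep_boxt z")
  case None
  then have "z = top" by (metis Rep_boxt_inverse top_boxt_def)
  then show ?thesis using that by blast
next
  case (Some p)
  obtain a b where p: "p = (a,b)" by (cases p)
  have ab: "a \<noteq> top" "b \<noteq> top" using Rep_boxt[of z] Some p by auto
  have "z = bcls a b"
    using Some p ab by (metis Rep_bcls Rep_boxt_inject)
  then show ?thesis using that ab by blast
qed

lemma bcls_eq_top: "(bcls a b = (top :: ('a::order_top,'b::order_top) boxt)) \<longleftrightarrow> a = top \<or> b = top"
  by (metis Rep_bcls Rep_top_boxt Rep_boxt_inject option.distinct(1))

lemma bcls_inj: "a \<noteq> top \<Longrightarrow> b \<noteq> top \<Longrightarrow> c \<noteq> top \<Longrightarrow> d \<noteq> top \<Longrightarrow>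
   (bcls a b = (bcls c d :: ('a::order_top,'b::order_top) boxt)) \<longleftrightarrow> a = c \<and> b = d"
  by (metis Rep_bcls Rep_boxt_inject option.inject prod.inject)

lemma boxmap_top: "boxmap f g top = top"
  by (simp add: boxmap_def Rep_top_boxt)

lemma boxmap_bcls: "a \<noteq> top \<Longrightarrow> b \<noteq> top \<Longrightarrow> boxmap f g (bcls a b) = bcls (f a) (g b)"
  by (simp add: boxmap_def Rep_bcls)

lemma sup_bcls:
  fixes a c :: "'a::{semilattice_sup,order_top}" and b d :: "'b::{semilattice_sup,order_top}"
  shows "a \<noteq> top \<Longrightarrow> b \<noteq> top \<Longrightarrow> c \<noteq> top \<Longrightarrow> d \<noteq> top \<Longrightarrow>
   sup (bcls a b) (bcls c d) = bcls (sup a c) (sup b d)"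
  by (simp add: sup_boxt_def Rep_bcls)

lemma kext_top: "(top :: 'k kext) = Infty" by (simp add: top_kext_def)

lemma kext_nontop: "(b :: 'k kext) \<noteq> top \<Longrightarrow> \<exists>i. b = Fin i"
  by (cases b) (auto simp: top_kext_def)

lemma sup_Fin: "sup (Fin i) (Fin j) = (if i = j then Fin i else (Infty :: 'k kext))"
  by (simp add: sup_kext_def)

lemma aut_Infty: assumes "g \<in> (Aut :: ('k kext \<Rightarrow> 'k kext) set)" shows "g Infty = Infty"
proof -
  from assms have b: "bij g" and o: "\<And>x y. x \<le> y \<longleftrightarrow> g x \<le> g y" by (auto simp: Aut_def)
  obtain x where x: "g x = Infty" using b by (metis bij_pointE)
  have "x \<le> Infty" by (simp add: less_eq_kext_def)
  then have "g x \<le> g Infty" using o by blast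
  then show ?thesis using x by (auto simp: less_eq_kext_def)
qed

lemma aut_Fin: assumes "g \<in> (Aut :: ('k kext \<Rightarrow> 'k kext) set)" shows "\<exists>j. g (Fin i) = Fin j"
proof -
  have "inj g" using assms by (auto simp: Aut_def bij_def)
  then have "g (Fin i) \<noteq> g Infty" by (metis inj_eq kext.distinct(1))
  then show ?thesis using aut_Infty[OF assms] by (cases "g (Fin i)") auto
qed

theorem proposition8p5:
  fixes S :: "('k::finite kext \<Rightarrow> 'k kext) set"
    and R :: "(('a::{finite, semilattice_sup, order_top}, 'k kext) boxt \<Rightarrow> ('a, 'k kext) boxt) set"
  assumes S_subgroup: "subgroup_Aut S"
    and S_disj: "\<forall>f\<in>S. \<forall>g\<in>S. f \<noteq> g \<longrightarrow> sup f g = kconst top"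
    and R_sub: "subsemiring_JM1 R"
    and R_a: "\<forall>\<phi>\<in>R. \<exists>f\<in>(JM1 :: ('a \<Rightarrow> 'a) set). \<exists>g\<in>insert (kconst top) S. \<phi> = boxmap f g"
    and R_b: "\<forall>a b. a \<noteq> (top :: 'a) \<longrightarrow> (\<forall>g\<in>insert (kconst top) S. boxmap (fab a b) g \<in> R)"
    and R_c: "\<forall>\<phi>\<in>R. \<exists>a b. \<exists>g\<in>insert (kconst top) S. a \<noteq> (top :: 'a) \<and> boxmap (fab a b) g \<le> \<phi>"
    and card_S: "card S = card (UNIV :: 'k set)"
    and n_cond: "card (UNIV :: 'k set) > 1 \<or> \<not> star_prop (sup :: 'a \<Rightarrow> 'a \<Rightarrow> 'a) top"
  shows "finite (UNIV :: ('a, 'k kext) boxt set)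
    \<and> semimodule R sup (\<circ>) sup (\<lambda>\<phi> z. \<phi> z)
    \<and> idempotent_sm (sup :: ('a, 'k kext) boxt \<Rightarrow> _ \<Rightarrow> _)
    \<and> irreducible_sm R sup (\<lambda>\<phi> z. \<phi> z)
    \<and> \<not> star_prop (sup :: ('a, 'k kext) boxt \<Rightarrow> _ \<Rightarrow> _) top"
proof -
  have RJM: "R \<subseteq> JM1" and Rne: "R \<noteq> {}" using R_sub by (auto simp: subsemiring_JM1_def)
  obtain a0 :: 'a where a0: "a0 \<noteq> top" using Rne R_c by blast
  define k0 :: 'k where "k0 = undefined"
  have idS: "id \<in> S" and SA: "S \<subseteq> Aut" using S_subgroup by (auto simp: subgroup_Aut_def)
  have Rb1: "a \<noteq> top \<Longrightarrow> g \<in> S \<Longrightarrow> boxmap (fab a b) g \<in> R" for a b g using R_b by blast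
  have Rb2: "a \<noteq> top \<Longrightarrow> boxmap (fab a b) (kconst top) \<in> R" for a b using R_b by blast
  have const: "boxmap f (kconst top) z = top" for f :: "'a \<Rightarrow> 'a" and z :: "('a,'k kext) boxt"
    by (cases z rule: boxt_cases) (auto simp: boxmap_top boxmap_bcls kconst_def bcls_eq_top)
  have Rtop: "r \<in> R \<Longrightarrow> r top = top" for r using RJM by (auto simp: JM1_def)
  have Rsup: "r \<in> R \<Longrightarrow> r (sup x y) = sup (r x) (r y)" for r x y using RJM by (auto simp: JM1_def)
  have trans: "\<exists>g\<in>S. g (Fin i) = Fin j" for i j
  proof -
    define h where "h = (\<lambda>g::'k kext \<Rightarrow> 'k kext. g (Fin i))"
    have finS: "finite S" proof (rule ccontr)
      assume "infinite S"
      then have "card (UNIV :: 'k set) = 0" using card_S by simp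
      then show False by simp
    qed
    have inj: "inj_on h S"
    proof (rule inj_onI)
      fix g1 g2 assume g: "g1 \<in> S" "g2 \<in> S" "h g1 = h g2"
      show "g1 = g2"
      proof (rule ccontr)
        assume "g1 \<noteq> g2"
        then have "sup g1 g2 = kconst top" using S_disj g by blast
        then have "(sup g1 g2) (Fin i) = kconst top (Fin i)" by (rule arg_cong)
        then have "sup (g1 (Fin i)) (g2 (Fin i)) = Infty"
          by (simp only: sup_apply kconst_def kext_top)
        moreover have a1: "g1 \<in> Aut" using g SA by blast
        from aut_Fin[OF a1, of i] obtain j' where j': "g1 (Fin i) = Fin j'" ..
        moreover have e: "g1 (Fin i) = g2 (Fin i)" using g(3) by (simp add: h_def)
        have "g2 (Fin i) = Fin j'" by (rule trans[OF sym[OF e] j'])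
        ultimately show False using j' by (simp add: sup_Fin)
      qed
    qed
    have sub: "h ` S \<subseteq> range Fin"
    proof (rule image_subsetI)
      fix g assume g: "g \<in> S"
      then have a1: "g \<in> Aut" using SA by blast
      from aut_Fin[OF a1, of i] obtain j' where "g (Fin i) = Fin j'" ..
      then show "h g \<in> range Fin" unfolding h_def by simp
    qed
    have c1: "card (h ` S) = card S" by (rule card_image[OF inj])
    have c2: "card (range (Fin :: 'k \<Rightarrow> 'k kext)) = card (UNIV :: 'k set)"
      by (rule card_image) (simp add: inj_on_def)
    have hS: "h ` S = range Fin"
      by (rule card_subset_eq[OF _ sub]) (use c1 c2 card_S in simp_all)
    have "Fin j \<in> h ` S" unfolding hS by (rule rangeI)
    then obtain g where g: "g \<in> S" "Fin j = h g" by (rule imageE) (rule that)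
    have "g (Fin i) = Fin j" using g(2) unfolding h_def by simp
    then show ?thesis using g(1) by (rule rev_bexI[rotated])
  qed
  have gen: "\<exists>r\<in>R. r x = z" if x: "x \<noteq> top" for x z :: "('a,'k kext) boxt"
  proof -
    obtain c p where cp: "c \<noteq> top" "p \<noteq> top" "x = bcls c p" using x by (cases x rule: boxt_cases) auto
    obtain i where i: "p = Fin i" using kext_nontop cp by blast
    show ?thesis
    proof (cases z rule: boxt_cases)
      case 1 then show ?thesis using const Rb2[OF a0] by blast
    next
      case (2 b q)
      obtain j where j: "q = Fin j" using kext_nontop 2 by blast
      obtain g where g: "g \<in> S" "g (Fin i) = Fin j" using trans by blast
      have "boxmap (fab c b) g x = z"
        using cp i j g 2 by (simp add: boxmap_bcls fab_def)
      then show ?thesis using Rb1[OF cp(1) g(1)] by blast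
    qed
  qed
  have fin: "finite (UNIV :: ('a, 'k kext) boxt set)"
  proof -
    have "UNIV \<subseteq> Abs_boxt ` (UNIV :: ('a \<times> 'k kext) option set)"
      proof
      fix z :: "('a,'k kext) boxt" show "z \<in> range Abs_boxt" by (rule range_eqI[of _ Abs_boxt "Rep_boxt z"]) (simp add: Rep_boxt_inverse)
    qed
    moreover have ke: "(UNIV :: 'k kext set) = insert Infty (range Fin)"
      by (auto intro: kext.exhaust)
    have "finite (insert Infty (range (Fin :: 'k \<Rightarrow> 'k kext)))" by simp
    then have "finite (UNIV :: 'k kext set)" unfolding ke .
    then have "finite (UNIV :: ('a \<times> 'k kext) set)" by (simp add: finite_Prod_UNIV)
    then have "finite (UNIV :: ('a \<times> 'k kext) option set)"
      by (simp add: UNIV_option_conv)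
    ultimately show ?thesis using finite_subset by blast
  qed
  have sm: "semimodule R sup (\<circ>) sup (\<lambda>\<phi> z. \<phi> z)"
    unfolding semimodule_def using Rsup by (auto simp: sup_aci)
  have idem: "idempotent_sm (sup :: ('a, 'k kext) boxt \<Rightarrow> _ \<Rightarrow> _)"
    by (simp add: idempotent_sm_def)
  have x0: "bcls a0 (Fin k0) \<noteq> (top :: ('a,'k kext) boxt)"
    using a0 by (simp add: bcls_eq_top kext_top)
  have nqt: "\<not> quasitrivial R (\<lambda>\<phi> z. \<phi> z)"
  proof
    assume q: "quasitrivial R (\<lambda>\<phi> z. \<phi> z)"
    have "boxmap (fab a0 a0) id (bcls a0 (Fin k0)) = boxmap (fab a0 a0) (kconst top) (bcls a0 (Fin k0))"
      using q Rb1[OF a0 idS] Rb2[OF a0] unfolding quasitrivial_def by blast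
    then show False using x0 a0 by (simp add: boxmap_bcls fab_def kext_top kconst_def bcls_eq_top)
  qed
  have subirr: "sub_irreducible R sup (\<lambda>\<phi> z. \<phi> z)"
    unfolding sub_irreducible_def id_quasitrivial_on_def
  proof (intro conjI nqt allI impI ballI)
    fix N r x assume N: "subsemimodule R sup (\<lambda>\<phi> z. \<phi> z) N \<and> N \<noteq> UNIV" and r: "r \<in> R" and x: "x \<in> N"
    show "r x = x"
    proof (cases "x = top")
      case True then show ?thesis using Rtop r by simp
    next
      case False
      have "z \<in> N" for z using gen[OF False, of z] N x unfolding subsemimodule_def by blast
      then show ?thesis using N by blast
    qed
  qed
  have quotirr: "quotient_irreducible R sup (\<lambda>\<phi> z. \<phi> z)"
    unfolding quotient_irreducible_def
  proof (intro conjI nqt allI impI)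
    fix E assume E: "sm_congruence R sup (\<lambda>\<phi> z. \<phi> z) E"
    have eq: "equiv UNIV E" and cs: "\<And>x y u v. (x, y) \<in> E \<Longrightarrow> (u, v) \<in> E \<Longrightarrow> (sup x u, sup y v) \<in> E"
      and ca: "\<And>r x y. r \<in> R \<Longrightarrow> (x, y) \<in> E \<Longrightarrow> (r x, r y) \<in> E"
      using E unfolding sm_congruence_def by blast+
    have refl: "(x,x) \<in> E" for x using eq by (simp add: equiv_def refl_on_def)
    have sym: "(x,y) \<in> E \<Longrightarrow> (y,x) \<in> E" for x y using eq by (meson equiv_def symD)
    have tr: "(x,y) \<in> E \<Longrightarrow> (y,z) \<in> E \<Longrightarrow> (x,z) \<in> E" for x y z using eq by (meson equiv_def transD)
    show "E = Id \<or> E = UNIV"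
    proof (cases "E = Id")
      case True then show ?thesis by blast
    next
      case False
      then obtain x y where xy: "(x,y) \<in> E" "x \<noteq> y" using refl by auto
      have "\<exists>u. u \<noteq> top \<and> (u, top) \<in> E"
      proof (cases x rule: boxt_cases)
        case 1
        then have "(y, top) \<in> E" "y \<noteq> top" using xy sym by auto
        then show ?thesis by blast
      next
        case (2 c p)
        note x = 2
        show ?thesis
        proof (cases y rule: boxt_cases)
          case 1 then show ?thesis using xy x by auto
        next
          case (2 d q)
          note y = 2
          show ?thesis
          proof (cases "c \<le> d")
            case False
            have "(boxmap (fab d d) id x, boxmap (fab d d) id y) \<in> E" using ca[OF Rb1[OF y(1) idS] xy(1)] .
            moreover have "boxmap (fab d d) id x = top" using x False by (simp add: boxmap_bcls fab_def bcls_eq_top)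
            moreover have "boxmap (fab d d) id y = y" using y by (simp add: boxmap_bcls fab_def)
            ultimately have "(y, top) \<in> E" using sym by simp
            moreover have "y \<noteq> top" using y by (simp add: bcls_eq_top)
            ultimately show ?thesis by blast
          next
            case True
            show ?thesis
            proof (cases "d \<le> c")
              case False
              have "(boxmap (fab c c) id x, boxmap (fab c c) id y) \<in> E" using ca[OF Rb1[OF x(1) idS] xy(1)] .
              moreover have "boxmap (fab c c) id y = top" using y False by (simp add: boxmap_bcls fab_def bcls_eq_top)
              moreover have "boxmap (fab c c) id x = x" using x by (simp add: boxmap_bcls fab_def)
              ultimately have "(x, top) \<in> E" by simp
              moreover have "x \<noteq> top" using x by (simp add: bcls_eq_top)
              ultimately show ?thesis by blast
            next
              case True
              have cd: "c = d" using True \<open>c \<le> d\<close> by simp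
              then have pq: "p \<noteq> q" using xy x y by auto
              obtain i j where ij: "p = Fin i" "q = Fin j" using kext_nontop x y by blast
              have "(sup x x, sup y x) \<in> E" using cs[OF xy(1) refl] .
              moreover have "sup y x = top" using x y cd pq ij
                by (simp add: sup_bcls sup_Fin bcls_eq_top kext_top)
              ultimately have "(x, top) \<in> E" by simp
              moreover have "x \<noteq> top" using x by (simp add: bcls_eq_top)
              ultimately show ?thesis by blast
            qed
          qed
        qed
      qed
      then obtain u where u: "u \<noteq> top" "(u, top) \<in> E" by blast
      have zt: "(z, top) \<in> E" for z
      proof -
        obtain r where r: "r \<in> R" "r u = z" using gen[OF u(1)] by blast
        show ?thesis using ca[OF r(1) u(2)] r(2) Rtop[OF r(1)] by simp
      qed
      have "E = UNIV"
      proof -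
        have "pr \<in> E" for pr :: "('a,'k kext) boxt \<times> ('a,'k kext) boxt"
        proof -
          obtain z w where "pr = (z,w)" by (cases pr)
          then show "pr \<in> E" using tr[OF zt[of z] sym[OF zt[of w]]] by simp
        qed
        then show ?thesis by blast
      qed
      then show ?thesis by blast
    qed
  qed
  have nstar: "\<not> star_prop (sup :: ('a, 'k kext) boxt \<Rightarrow> _ \<Rightarrow> _) top"
    unfolding star_prop_def
  proof (intro notI, elim exE)
    fix u :: "('a,'k kext) boxt" assume H: "\<forall>x. x \<noteq> top \<longrightarrow> top \<noteq> sup u x"
    show False
    proof (cases u rule: boxt_cases)
      case 1
      have "sup top (bcls a0 (Fin k0)) = (top :: ('a,'k kext) boxt)"
        by (rule top_unique[THEN iffD1]) (rule sup_ge1)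
      then show ?thesis using H x0 1 by auto
    next
      case (2 c p)
      obtain i where i: "p = Fin i" using kext_nontop 2 by blast
      show ?thesis
      proof (cases "card (UNIV :: 'k set) > 1")
        case True
        obtain j :: 'k where j: "j \<noteq> i"
        proof -
          have "UNIV \<noteq> {i}" proof
            assume e: "UNIV = {i}"
            have "card (UNIV :: 'k set) = 1" unfolding e by simp
            then show False using True by simp
          qed
          then show ?thesis using that by blast
        qed
        have xn: "bcls a0 (Fin j) \<noteq> (top :: ('a,'k kext) boxt)" using a0 by (simp add: bcls_eq_top kext_top)
        have "sup u (bcls a0 (Fin j)) = top" using 2 i j a0
          by (simp add: sup_bcls sup_Fin bcls_eq_top kext_top)
        then show ?thesis using H xn by auto
      next
        case False
        then have "\<not> star_prop (sup :: 'a \<Rightarrow> 'a \<Rightarrow> 'a) top" using n_cond by blast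
        then obtain y :: 'a where y: "y \<noteq> top" "top = sup c y" unfolding star_prop_def by blast
        have xn: "bcls y p \<noteq> (top :: ('a,'k kext) boxt)" using y 2 by (simp add: bcls_eq_top)
        have "sup u (bcls y p) = top" using 2 y
          by (simp add: sup_bcls bcls_eq_top)
        then show ?thesis using H xn by auto
      qed
    qed
  qed
  show ?thesis using fin sm idem subirr quotirr nstar by (simp add: irreducible_sm_def)
qed

end
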